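(* Consider the two-armed improving bandit instance on the horizon $[0,T]$ with arms $f_1(t)=1$ for all $t$, and $f_2(t)=0$ for $t<\theta$, $f_2(t)=\alpha(t-\theta)$ for $t\ge\theta$, where $\theta$ is unknown. Suppose an agent is $\tilde\alpha$-gritty, i.e. guesses that the slope of the increasing portion of $f_2$ is $\tilde\alpha>0$, and that the agent's goal is to maximize the competitive ratio. Then the agent plays $f_2$ for $T-\sqrt{2T/\tilde\alpha}$ units of time, after which it switches to $f_1$ permanently.
   Context: Time is continuous. The argument $t$ of each arm's reward function is the amount of time that arm has been played so far. The reward from an arm is the integral of its reward function over the time spent on it. A strategy achieves competitive ratio $g$ if $\mathrm{ALG}/\mathrm{OPT}\ge g$, where $\mathrm{ALG}$ is the strategy's total reward and $\mathrm{OPT}$ is the optimal achievable total reward in hindsight. The agent considers only strategies that play $f_2$ for some time $s$ and then switch permanently to $f_1$. It chooses the switch point $s$ to maximize its worst-case competitive ratio, computed with its guessed slope $\tilde\alpha$. This worst case is over the unknown $\theta$. There are two extreme cases. If $f_2$ never increases, the ratio is $\frac{T-s}{T}$, which decreases in $s$. If $f_2$ begins increasing right after the switch, the ratio is $\frac{T-s}{\frac{\tilde\alpha}{2}(T-s)^2}$, which increases in $s$. The competitive-ratio-maximizing agent chooses the $s$ at which these two quantities are equal. *)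

theory Defs
  imports Complex_Main
begin

text \<open>Competitive ratio when playing f2 for time s then f1 until T, in the two extreme
  cases of the context (guessed slope a): f2 never increases, and f2 starts
  increasing (with slope a) right after the switch.\<close>

definition ratio_never :: "real \<Rightarrow> real \<Rightarrow> real" where
  "ratio_never T s = (T - s) / T"

definition ratio_after :: "real \<Rightarrow> real \<Rightarrow> real \<Rightarrow> real" where
  "ratio_after a T s = (T - s) / ((a / 2) * (T - s)^2)"

definition worst_ratio :: "real \<Rightarrow> real \<Rightarrow> real \<Rightarrow> real" where
  "worst_ratio a T s = min (ratio_never T s) (ratio_after a T s)"

end

theory Submission
  imports Defs
begin

lemma after_eq: "u \<noteq> 0 \<Longrightarrow> a \<noteq> 0 \<Longrightarrow> ratio_after a T (T - u) = 2 / (a * u)"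
  unfolding ratio_after_def by (simp add: power2_eq_square field_simps)

theorem lemma2:
  fixes T a :: real
  assumes "T > 0" and "a > 0" and "2 \<le> a * T"
  defines "s\<^sub>0 \<equiv> T - sqrt (2 * T / a)"
  shows "s\<^sub>0 \<in> {0..<T}
    \<and> ratio_never T s\<^sub>0 = ratio_after a T s\<^sub>0
    \<and> (\<forall>s\<in>{0..T}. s \<noteq> s\<^sub>0 \<longrightarrow> worst_ratio a T s < worst_ratio a T s\<^sub>0)"
proof -
  define r where "r = sqrt (2 * T / a)"
  have rpos: "r > 0" using assms unfolding r_def by simp
  have r2: "r^2 = 2 * T / a" using assms unfolding r_def by simp
  have "2 * T / a \<le> T^2" using assms by (simp add: field_simps power2_eq_square)
  hence rle: "r \<le> T" unfolding r_def using assms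
    by (metis abs_of_pos real_sqrt_abs real_sqrt_le_mono)
  have s0: "s\<^sub>0 = T - r" unfolding s\<^sub>0_def r_def ..
  have ar: "2 / (a * r) = r / T" using r2 rpos assms
    by (simp add: field_simps power2_eq_square)
  have nev: "ratio_never T (T - u) = u / T" for u unfolding ratio_never_def by simp
  have w0: "worst_ratio a T s\<^sub>0 = r / T"
    unfolding worst_ratio_def s0 nev after_eq[OF rpos[THEN less_imp_neq, symmetric] assms(2)[THEN less_imp_neq, symmetric]]
    using ar by simp
  have main: "worst_ratio a T s < r / T" if "s \<in> {0..T}" "s \<noteq> s\<^sub>0" for s
  proof -
    define u where "u = T - s"
    have s: "s = T - u" unfolding u_def by simp
    have u: "0 \<le> u" "u \<le> T" "u \<noteq> r" using that s0 unfolding u_def by auto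
    show ?thesis
    proof (cases "u = 0")
      case True
      then show ?thesis unfolding s worst_ratio_def ratio_never_def ratio_after_def
        using rpos assms by simp
    next
      case False
      hence up: "u > 0" using u by simp
      have we: "worst_ratio a T s = min (u / T) (2 / (a * u))"
        unfolding worst_ratio_def s nev using after_eq[OF False] assms by simp
      show ?thesis
      proof (cases "u < r")
        case True
        have "u / T < r / T" using True assms by (simp add: divide_strict_right_mono)
        then show ?thesis unfolding we by simp
      next
        case False
        hence "r < u" using u by simp
        hence "2 / (a * u) < 2 / (a * r)" using rpos assms
          by (simp add: frac_less2 mult_strict_left_mono)
        then show ?thesis unfolding we ar by simp
      qed
    qed
  qed
  show ?thesis
  proof (intro conjI ballI impI)
    show "s\<^sub>0 \<in> {0..<T}" using s0 rpos rle by simp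
    show "ratio_never T s\<^sub>0 = ratio_after a T s\<^sub>0"
      unfolding s0 nev using after_eq[of r a T] rpos assms ar by simp
    fix s assume "s \<in> {0..T}" "s \<noteq> s\<^sub>0"
    then show "worst_ratio a T s < worst_ratio a T s\<^sub>0" using main w0 by simp
  qed
qed

end
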